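(* Assume the setting in the context. (a) Assume Conditions (MM), (SS), (JS-cts) and (JS-jump). Suppose that for every $f\in\mathcal{D}_{\mathcal{X}}$ there is at most one $u_+\in\mathcal{X}^{\mathcal{U}}$ with $(\widehat Lu_+)|_{\mathcal{U}}=0$, $\widetilde{\operatorname{Tr}}^{\mathcal{U}}_{\mathcal{X}}u_+=f$, and at most one $u_-\in\mathcal{X}^{\mathcal{V}}$ with $(\widehat Lu_-)|_{\mathcal{V}}=0$, $\widetilde{\operatorname{Tr}}^{\mathcal{V}}_{\mathcal{X}}u_-=f$. Then $\widetilde{\operatorname{Tr}}^{\mathcal{U}}_{\mathcal{X}}\widehat{\mathbf{S}}^L_{\mathcal{U}}:\mathcal{N}_{\mathcal{X}}\to\mathcal{D}_{\mathcal{X}}$ is one-to-one. If in addition there is $C_0$ such that every $u_+\in\mathcal{X}^{\mathcal{U}}$ with $(\widehat Lu_+)|_{\mathcal{U}}=0$ and every $u_-\in\mathcal{X}^{\mathcal{V}}$ with $(\widehat Lu_-)|_{\mathcal{V}}=0$ satisfy $\|u_+\|_{\mathcal{X}^{\mathcal{U}}}\le C_0\|\widetilde{\operatorname{Tr}}^{\mathcal{U}}_{\mathcal{X}}u_+\|_{\mathcal{D}_{\mathcal{X}}}$ and $\|u_-\|_{\mathcal{X}^{\mathcal{V}}}\le C_0\|\widetilde{\operatorname{Tr}}^{\mathcal{V}}_{\mathcal{X}}u_-\|_{\mathcal{D}_{\mathcal{X}}}$, then there is $C_1$ with $\|g\|_{\mathcal{N}_{\mathcal{X}}}\le C_1\|\widetilde{\operatorname{Tr}}^{\mathcal{U}}_{\mathcal{X}}\widehat{\mathbf{S}}^L_{\mathcal{U}}g\|_{\mathcal{D}_{\mathcal{X}}}$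 for all $g\in\mathcal{N}_{\mathcal{X}}$. (b) Assume Conditions (TT), (DD), (JD-cts) and (JD-jump). Suppose that for every $g\in\mathcal{N}_{\mathcal{X}}$ there is at most one $u_+\in\mathcal{X}^{\mathcal{U}}$ with $(\widehat Lu_+)|_{\mathcal{U}}=0$, $\widehat{\mathbf{M}}^{\mathcal{U}}_Bu_+=g$, and at most one $u_-\in\mathcal{X}^{\mathcal{V}}$ with $(\widehat Lu_-)|_{\mathcal{V}}=0$, $\widehat{\mathbf{M}}^{\mathcal{V}}_Bu_-=g$. Then $\widehat{\mathbf{M}}^{\mathcal{U}}_B\widehat{\mathbf{D}}^B_{\mathcal{U}}:\mathcal{D}_{\mathcal{X}}\to\mathcal{N}_{\mathcal{X}}$ is one-to-one. If in addition there is $C_0$ such that every $u_+\in\mathcal{X}^{\mathcal{U}}$ with $(\widehat Lu_+)|_{\mathcal{U}}=0$ and every $u_-\in\mathcal{X}^{\mathcal{V}}$ with $(\widehat Lu_-)|_{\mathcal{V}}=0$ satisfy $\|u_+\|_{\mathcal{X}^{\mathcal{U}}}\le C_0\|\widehat{\mathbf{M}}^{\mathcal{U}}_Bu_+\|_{\mathcal{N}_{\mathcal{X}}}$ and $\|u_-\|_{\mathcal{X}^{\mathcal{V}}}\le C_0\|\widehat{\mathbf{M}}^{\mathcal{V}}_Bu_-\|_{\mathcal{N}_{\mathcal{X}}}$, then there is $C_1$ with $\|f\|_{\mathcal{D}_{\mathcal{X}}}\le C_1\|\widehat{\mathbf{M}}^{\mathcal{U}}_B\widehat{\mathbf{D}}^B_{\mathcal{U}}f\|_{\mathcal{N}_{\mathcal{X}}}$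 for all $f\in\mathcal{D}_{\mathcal{X}}$.
   Context: Let $\mathcal{X}^{\mathcal{U}}$, $\mathcal{X}^{\mathcal{V}}$, $\mathcal{D}_{\mathcal{X}}$, $\mathcal{N}_{\mathcal{X}}$ be quasi-Banach spaces. For $\mathcal{O}\in\{\mathcal{U},\mathcal{V}\}$: let $u\mapsto(\widehat Lu)|_{\mathcal{O}}$ be a linear operator on $\mathcal{X}^{\mathcal{O}}$, let $\mathcal{K}^{\mathcal{O}}=\{u\in\mathcal{X}^{\mathcal{O}}:(\widehat Lu)|_{\mathcal{O}}=0\}$, and let $\widetilde{\operatorname{Tr}}^{\mathcal{O}}_{\mathcal{X}}:\mathcal{K}^{\mathcal{O}}\to\mathcal{D}_{\mathcal{X}}$, $\widehat{\mathbf{M}}^{\mathcal{O}}_B:\mathcal{K}^{\mathcal{O}}\to\mathcal{N}_{\mathcal{X}}$, $\widehat{\mathbf{D}}^B_{\mathcal{O}}:\mathcal{D}_{\mathcal{X}}\to\mathcal{X}^{\mathcal{O}}$, $\widehat{\mathbf{S}}^L_{\mathcal{O}}:\mathcal{N}_{\mathcal{X}}\to\mathcal{X}^{\mathcal{O}}$ be linear operators. For $\mathcal{O}\in\{\mathcal U,\mathcal V\}$ consider: (T)$_{\mathcal{O}}$ $\widetilde{\operatorname{Tr}}^{\mathcal{O}}_{\mathcal{X}}$ is bounded $\mathcal{K}^{\mathcal{O}}\to\mathcal{D}_{\mathcal{X}}$; (M)$_{\mathcal{O}}$ $\widehat{\mathbf{M}}^{\mathcal{O}}_B$ is bounded $\mathcal{K}^{\mathcal{O}}\to\mathcal{N}_{\mathcal{X}}$;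 (S)$_{\mathcal{O}}$ $\widehat{\mathbf{S}}^L_{\mathcal{O}}$ is bounded $\mathcal{N}_{\mathcal{X}}\to\mathcal{X}^{\mathcal{O}}$ with range in $\mathcal{K}^{\mathcal{O}}$; (D)$_{\mathcal{O}}$ $\widehat{\mathbf{D}}^B_{\mathcal{O}}$ is bounded $\mathcal{D}_{\mathcal{X}}\to\mathcal{X}^{\mathcal{O}}$ with range in $\mathcal{K}^{\mathcal{O}}$; (G)$_{\mathcal{O}}$ every $u\in\mathcal{K}^{\mathcal{O}}$ satisfies $u=-\widehat{\mathbf{D}}^B_{\mathcal{O}}(\widetilde{\operatorname{Tr}}^{\mathcal{O}}_{\mathcal{X}}u)+\widehat{\mathbf{S}}^L_{\mathcal{O}}(\widehat{\mathbf{M}}^{\mathcal{O}}_Bu)$. Condition (TT) means (T)$_{\mathcal U}$ and (T)$_{\mathcal V}$ both hold; likewise (MM), (SS), (DD), (GG). Further conditions (each including that the potentials involved lie in the respective $\mathcal K^{\mathcal O}$, so the expressions are defined): (JS-cts) $\widetilde{\operatorname{Tr}}^{\mathcal{U}}_{\mathcal{X}}(\widehat{\mathbf{S}}^L_{\mathcal{U}}g)-\widetilde{\operatorname{Tr}}^{\mathcal{V}}_{\mathcal{X}}(\widehat{\mathbf{S}}^L_{\mathcal{V}}g)=0$ for all $g\in\mathcal{N}_{\mathcal{X}}$; (JD-cts) $\widehat{\mathbf{M}}^{\mathcal{U}}_B(\widehat{\mathbf{D}}^B_{\mathcal{U}}f)-\widehat{\mathbf{M}}^{\mathcal{V}}_B(\widehat{\mathbf{D}}^B_{\mathcal{V}}f)=0$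 for all $f\in\mathcal{D}_{\mathcal{X}}$; (JS-jump) $\widehat{\mathbf{M}}^{\mathcal{U}}_B(\widehat{\mathbf{S}}^L_{\mathcal{U}}g)+\widehat{\mathbf{M}}^{\mathcal{V}}_B(\widehat{\mathbf{S}}^L_{\mathcal{V}}g)=g$ for all $g\in\mathcal{N}_{\mathcal{X}}$; (JD-jump) $\widetilde{\operatorname{Tr}}^{\mathcal{U}}_{\mathcal{X}}(\widehat{\mathbf{D}}^B_{\mathcal{U}}f)+\widetilde{\operatorname{Tr}}^{\mathcal{V}}_{\mathcal{X}}(\widehat{\mathbf{D}}^B_{\mathcal{V}}f)=-f$ for all $f\in\mathcal{D}_{\mathcal{X}}$. *)

theory Defs
  imports Complex_Main
begin

definition quasi_norm :: "('a::real_vector \<Rightarrow> real) \<Rightarrow> bool" where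
  "quasi_norm N \<longleftrightarrow>
     (\<forall>x. 0 \<le> N x) \<and> (\<forall>x. N x = 0 \<longleftrightarrow> x = 0) \<and>
     (\<forall>c x. N (c *\<^sub>R x) = \<bar>c\<bar> * N x) \<and>
     (\<exists>K\<ge>1. \<forall>x y. N (x + y) \<le> K * (N x + N y))"

definition quasi_banach :: "('a::real_vector \<Rightarrow> real) \<Rightarrow> bool" where
  "quasi_banach N \<longleftrightarrow> quasi_norm N \<and>
     (\<forall>s::nat \<Rightarrow> 'a. (\<forall>e>0. \<exists>M. \<forall>m\<ge>M. \<forall>n\<ge>M. N (s m - s n) < e)
        \<longrightarrow> (\<exists>l. (\<lambda>n. N (s n - l)) \<longlonglongrightarrow> 0))"

definition linear_on_set :: "'a::real_vector set \<Rightarrow> ('a \<Rightarrow> 'b::real_vector) \<Rightarrow> bool" where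
  "linear_on_set A f \<longleftrightarrow>
     (\<forall>x\<in>A. \<forall>y\<in>A. f (x + y) = f x + f y) \<and> (\<forall>c. \<forall>x\<in>A. f (c *\<^sub>R x) = c *\<^sub>R f x)"

definition bounded_op :: "'a set \<Rightarrow> ('a \<Rightarrow> real) \<Rightarrow> ('b \<Rightarrow> real) \<Rightarrow> ('a \<Rightarrow> 'b) \<Rightarrow> bool" where
  "bounded_op A NA NB T \<longleftrightarrow> (\<exists>C. \<forall>x\<in>A. NB (T x) \<le> C * NA x)"

end

theory Submission
  imports Defs
begin

lemma los_zero:
  assumes "linear_on_set A f" "(0::'a::real_vector) \<in> A"
  shows "f 0 = (0::'b::real_vector)"
proof -
  have "f ((0::real) *\<^sub>R (0::'a)) = (0::real) *\<^sub>R f 0"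
    using assms unfolding linear_on_set_def by blast
  then show ?thesis by simp
qed

lemma los_diff:
  assumes "linear_on_set A f" "x \<in> A" "y \<in> A" "(-1::real) *\<^sub>R y \<in> A"
  shows "f (x - y) = f x - f y"
proof -
  have "f (x + (-1::real) *\<^sub>R y) = f x + f ((-1::real) *\<^sub>R y)"
    using assms unfolding linear_on_set_def by blast
  moreover have "f ((-1::real) *\<^sub>R y) = (-1::real) *\<^sub>R f y"
    using assms unfolding linear_on_set_def by blast
  ultimately show ?thesis by simp
qed

lemma bop_nonneg:
  assumes "bounded_op A NA NB T" "\<forall>x. 0 \<le> NA x"
  shows "\<exists>C\<ge>0. \<forall>x\<in>A. NB (T x) \<le> C * NA x"
proof -
  obtain C where C: "\<forall>x\<in>A. NB (T x) \<le> C * NA x" using assms(1) unfolding bounded_op_def by blast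
  have "\<forall>x\<in>A. NB (T x) \<le> max C 0 * NA x"
  proof
    fix x assume "x \<in> A"
    have "C * NA x \<le> max C 0 * NA x" using assms(2) by (simp add: mult_right_mono)
    then show "NB (T x) \<le> max C 0 * NA x" using C \<open>x \<in> A\<close> by force
  qed
  then show ?thesis by (intro exI[of _ "max C 0"]) simp
qed

lemma qn_props:
  assumes "quasi_banach N"
  shows "\<forall>x. 0 \<le> N x" "\<forall>x. N x = 0 \<longleftrightarrow> x = 0" "\<forall>x. N (- x) = N x"
    "\<exists>K\<ge>1. \<forall>x y. N (x + y) \<le> K * (N x + N y)"
proof -
  have q: "quasi_norm N" using assms unfolding quasi_banach_def by simp
  then show "\<forall>x. 0 \<le> N x" "\<forall>x. N x = 0 \<longleftrightarrow> x = 0"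
    "\<exists>K\<ge>1. \<forall>x y. N (x + y) \<le> K * (N x + N y)" unfolding quasi_norm_def by auto
  show "\<forall>x. N (- x) = N x"
  proof
    fix x
    have "N ((-1) *\<^sub>R x) = \<bar>-1\<bar> * N x" using q unfolding quasi_norm_def by blast
    then show "N (- x) = N x" by simp
  qed
qed

lemma C0_nonneg:
  fixes C0 :: real
  assumes "\<forall>u\<in>K. nX u \<le> C0 * nD (Tr u)" "\<forall>x. 0 \<le> nD x"
  shows "\<forall>u\<in>K. nX u \<le> max C0 0 * nD (Tr u)"
proof
  fix u assume "u \<in> K"
  have "C0 * nD (Tr u) \<le> max C0 0 * nD (Tr u)" using assms(2) mult_right_mono[of C0 "max C0 0" "nD (Tr u)"] by simp
  then show "nX u \<le> max C0 0 * nD (Tr u)" using assms(1) \<open>u \<in> K\<close> by force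
qed

theorem theorem6p3:
  fixes nXU :: "'xu::real_vector \<Rightarrow> real" and nXV :: "'xv::real_vector \<Rightarrow> real"
    and nD :: "'d::real_vector \<Rightarrow> real" and nN :: "'n::real_vector \<Rightarrow> real"
    and LU :: "'xu \<Rightarrow> 'yu::real_vector" and LV :: "'xv \<Rightarrow> 'yv::real_vector"
    and TrU :: "'xu \<Rightarrow> 'd" and TrV :: "'xv \<Rightarrow> 'd"
    and MU :: "'xu \<Rightarrow> 'n" and MV :: "'xv \<Rightarrow> 'n"
    and DU :: "'d \<Rightarrow> 'xu" and DV :: "'d \<Rightarrow> 'xv"
    and SU :: "'n \<Rightarrow> 'xu" and SV :: "'n \<Rightarrow> 'xv"
    and KU :: "'xu set" and KV :: "'xv set"
  assumes qb: "quasi_banach nXU" "quasi_banach nXV" "quasi_banach nD" "quasi_banach nN"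
    and linL: "linear LU" "linear LV"
    and KU_def: "KU = {u. LU u = 0}" and KV_def: "KV = {u. LV u = 0}"
    and linTr: "linear_on_set KU TrU" "linear_on_set KV TrV"
    and linM: "linear_on_set KU MU" "linear_on_set KV MV"
    and linD: "linear DU" "linear DV"
    and linS: "linear SU" "linear SV"
  shows
   "(  \<comment> \<open>(a)\<close>
      ( \<comment> \<open>(MM)\<close> bounded_op KU nXU nN MU \<and> bounded_op KV nXV nN MV
      \<and> \<comment> \<open>(SS)\<close> bounded_op UNIV nN nXU SU \<and> range SU \<subseteq> KU
                  \<and> bounded_op UNIV nN nXV SV \<and> range SV \<subseteq> KV
      \<and> \<comment> \<open>(JS-cts)\<close> (\<forall>g. TrU (SU g) - TrV (SV g) = 0)
      \<and> \<comment> \<open>(JS-jump)\<close> (\<forall>g. MU (SU g) + MV (SV g) = g)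
      \<and> (\<forall>f u v. u \<in> KU \<and> TrU u = f \<and> v \<in> KU \<and> TrU v = f \<longrightarrow> u = v)
      \<and> (\<forall>f u v. u \<in> KV \<and> TrV u = f \<and> v \<in> KV \<and> TrV v = f \<longrightarrow> u = v))
      \<longrightarrow>
      (inj (\<lambda>g. TrU (SU g))
       \<and> ((\<exists>C0. (\<forall>u\<in>KU. nXU u \<le> C0 * nD (TrU u)) \<and> (\<forall>u\<in>KV. nXV u \<le> C0 * nD (TrV u)))
          \<longrightarrow> (\<exists>C1. \<forall>g. nN g \<le> C1 * nD (TrU (SU g))))))
    \<and>
    (  \<comment> \<open>(b)\<close>
      ( \<comment> \<open>(TT)\<close> bounded_op KU nXU nD TrU \<and> bounded_op KV nXV nD TrV
      \<and> \<comment> \<open>(DD)\<close> bounded_op UNIV nD nXU DU \<and> range DU \<subseteq> KU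
                  \<and> bounded_op UNIV nD nXV DV \<and> range DV \<subseteq> KV
      \<and> \<comment> \<open>(JD-cts)\<close> (\<forall>f. MU (DU f) - MV (DV f) = 0)
      \<and> \<comment> \<open>(JD-jump)\<close> (\<forall>f. TrU (DU f) + TrV (DV f) = - f)
      \<and> (\<forall>g u v. u \<in> KU \<and> MU u = g \<and> v \<in> KU \<and> MU v = g \<longrightarrow> u = v)
      \<and> (\<forall>g u v. u \<in> KV \<and> MV u = g \<and> v \<in> KV \<and> MV v = g \<longrightarrow> u = v))
      \<longrightarrow>
      (inj (\<lambda>f. MU (DU f))
       \<and> ((\<exists>C0. (\<forall>u\<in>KU. nXU u \<le> C0 * nN (MU u)) \<and> (\<forall>u\<in>KV. nXV u \<le> C0 * nN (MV u)))
          \<longrightarrow> (\<exists>C1. \<forall>f. nD f \<le> C1 * nN (MU (DU f))))))"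
proof -
  have K0: "0 \<in> KU" "0 \<in> KV" using linL by (auto simp: KU_def KV_def linear_0)
  have sub: "\<And>x y. x \<in> KU \<Longrightarrow> y \<in> KU \<Longrightarrow> x - y \<in> KU" "\<And>x y. x \<in> KV \<Longrightarrow> y \<in> KV \<Longrightarrow> x - y \<in> KV"
    using linL by (auto simp: KU_def KV_def linear_diff)
  have negU: "\<And>x. x \<in> KU \<Longrightarrow> (-1::real) *\<^sub>R x \<in> KU"
    using linL by (auto simp: KU_def linear_neg)
  have z: "TrU 0 = 0" "TrV 0 = 0" "MU 0 = 0" "MV 0 = 0"
    using los_zero[OF linTr(1) K0(1)] los_zero[OF linTr(2) K0(2)]
      los_zero[OF linM(1) K0(1)] los_zero[OF linM(2) K0(2)] by auto
  note pN = qn_props[OF qb(4)] and pD = qn_props[OF qb(3)]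
    and pU = qn_props[OF qb(1)] and pV = qn_props[OF qb(2)]
  show ?thesis
  proof (intro conjI impI)
    assume h: "bounded_op KU nXU nN MU \<and> bounded_op KV nXV nN MV
      \<and> bounded_op UNIV nN nXU SU \<and> range SU \<subseteq> KU
                  \<and> bounded_op UNIV nN nXV SV \<and> range SV \<subseteq> KV
      \<and> (\<forall>g. TrU (SU g) - TrV (SV g) = 0)
      \<and> (\<forall>g. MU (SU g) + MV (SV g) = g)
      \<and> (\<forall>f u v. u \<in> KU \<and> TrU u = f \<and> v \<in> KU \<and> TrU v = f \<longrightarrow> u = v)
      \<and> (\<forall>f u v. u \<in> KV \<and> TrV u = f \<and> v \<in> KV \<and> TrV v = f \<longrightarrow> u = v)"
    have r1: "range SU \<subseteq> KU" using h by (elim conjE) assumption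
    have r2: "range SV \<subseteq> KV" using h by (elim conjE) assumption
    have SUK: "\<And>g. SU g \<in> KU" and SVK: "\<And>g. SV g \<in> KV" using r1 r2 by auto
    have eqT0: "\<forall>g. TrU (SU g) - TrV (SV g) = 0" using h by (elim conjE) assumption
    have eqT: "\<And>g. TrV (SV g) = TrU (SU g)" using eqT0 by simp
    show "inj (\<lambda>g. TrU (SU g))"
    proof (rule injI)
      fix g1 g2 assume e: "TrU (SU g1) = TrU (SU g2)"
      define g where "g = g1 - g2"
      have SUg: "SU g = SU g1 - SU g2" "SV g = SV g1 - SV g2"
        using linS by (auto simp: g_def linear_diff)
      have "TrU (SU g) = 0" using e SUg los_diff[OF linTr(1) SUK[of g1] SUK[of g2] negU[OF SUK[of g2]]] by simp
      hence a: "SU g = 0" using conjunct1[OF conjunct2[OF conjunct2[OF conjunct2[OF conjunct2[OF conjunct2[OF conjunct2[OF conjunct2[OF conjunct2[OF h]]]]]]]], rule_format, of "SU g" "0" 0] K0 z SUK by simp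
      have "TrV (SV g) = 0" using eqT \<open>TrU (SU g) = 0\<close> by simp
      hence b: "SV g = 0" using conjunct2[OF conjunct2[OF conjunct2[OF conjunct2[OF conjunct2[OF conjunct2[OF conjunct2[OF conjunct2[OF conjunct2[OF h]]]]]]]], rule_format, of "SV g" "0" 0] K0 z SVK by simp
      have jj: "\<forall>g. MU (SU g) + MV (SV g) = g" using h by (elim conjE) assumption
      have "g = MU (SU g) + MV (SV g)" using jj by simp
      also have "\<dots> = 0" using a b z by simp
      finally show "g1 = g2" by (simp add: g_def)
    qed
    assume "\<exists>C0. (\<forall>u\<in>KU. nXU u \<le> C0 * nD (TrU u)) \<and> (\<forall>u\<in>KV. nXV u \<le> C0 * nD (TrV u))"
    then obtain C0 where c0: "\<forall>u\<in>KU. nXU u \<le> C0 * nD (TrU u)" "\<forall>u\<in>KV. nXV u \<le> C0 * nD (TrV u)"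
      by blast
    define C where "C = max C0 0"
    have c: "\<forall>u\<in>KU. nXU u \<le> C * nD (TrU u)" "\<forall>u\<in>KV. nXV u \<le> C * nD (TrV u)"
      using C0_nonneg[OF c0(1) pD(1)] C0_nonneg[OF c0(2) pD(1)] by (auto simp: C_def)
    have C: "C \<ge> 0" by (simp add: C_def)
    obtain A where A: "A \<ge> 0" "\<forall>x\<in>KU. nN (MU x) \<le> A * nXU x" using bop_nonneg[OF conjunct1[OF h] pU(1)] by blast
    obtain B where B: "B \<ge> 0" "\<forall>x\<in>KV. nN (MV x) \<le> B * nXV x" using bop_nonneg[OF conjunct1[OF conjunct2[OF h]] pV(1)] by blast
    obtain K where K: "K \<ge> 1" "\<forall>x y. nN (x + y) \<le> K * (nN x + nN y)" using pN(4) by blast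
    show "\<exists>C1. \<forall>g. nN g \<le> C1 * nD (TrU (SU g))"
    proof (intro exI allI)
      fix g
      have 1: "nN (MU (SU g)) \<le> A * C * nD (TrU (SU g))"
      proof -
        have "nN (MU (SU g)) \<le> A * nXU (SU g)" using A(2) SUK[of g] by blast
        also have "\<dots> \<le> A * (C * nD (TrU (SU g)))" using c(1) SUK[of g] A(1) by (simp add: mult_left_mono)
        finally show ?thesis by (simp add: mult.assoc)
      qed
      have 2: "nN (MV (SV g)) \<le> B * C * nD (TrU (SU g))"
      proof -
        have "nN (MV (SV g)) \<le> B * nXV (SV g)" using B(2) SVK[of g] by blast
        also have "\<dots> \<le> B * (C * nD (TrV (SV g)))" using c(2) SVK[of g] B(1) by (simp add: mult_left_mono)
        finally show ?thesis by (simp add: mult.assoc eqT)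
      qed
      have jj: "\<forall>g. MU (SU g) + MV (SV g) = g" using h by (elim conjE) assumption
      have "nN g = nN (MU (SU g) + MV (SV g))" using jj by simp
      also have "\<dots> \<le> K * (nN (MU (SU g)) + nN (MV (SV g)))" using K by blast
      also have "\<dots> \<le> K * (A * C * nD (TrU (SU g)) + B * C * nD (TrU (SU g)))"
        using 1 2 K by (intro mult_left_mono) auto
      also have "\<dots> = (K * (A * C + B * C)) * nD (TrU (SU g))" by (simp add: algebra_simps)
      finally show "nN g \<le> (K * (A * C + B * C)) * nD (TrU (SU g))" .
    qed
  next
    assume h: "bounded_op KU nXU nD TrU \<and> bounded_op KV nXV nD TrV
      \<and> bounded_op UNIV nD nXU DU \<and> range DU \<subseteq> KU
                  \<and> bounded_op UNIV nD nXV DV \<and> range DV \<subseteq> KV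
      \<and> (\<forall>f. MU (DU f) - MV (DV f) = 0)
      \<and> (\<forall>f. TrU (DU f) + TrV (DV f) = - f)
      \<and> (\<forall>g u v. u \<in> KU \<and> MU u = g \<and> v \<in> KU \<and> MU v = g \<longrightarrow> u = v)
      \<and> (\<forall>g u v. u \<in> KV \<and> MV u = g \<and> v \<in> KV \<and> MV v = g \<longrightarrow> u = v)"
    have r1: "range DU \<subseteq> KU" using h by (elim conjE) assumption
    have r2: "range DV \<subseteq> KV" using h by (elim conjE) assumption
    have DUK: "\<And>g. DU g \<in> KU" and DVK: "\<And>g. DV g \<in> KV" using r1 r2 by auto
    have eqM0: "\<forall>f. MU (DU f) - MV (DV f) = 0" using h by (elim conjE) assumption
    have eqM: "\<And>g. MV (DV g) = MU (DU g)" using eqM0 by simp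
    have jump0: "\<forall>f. TrU (DU f) + TrV (DV f) = - f" using h by (elim conjE) assumption
    have jump: "\<And>f. f = - (TrU (DU f) + TrV (DV f))" using jump0 by simp
    show "inj (\<lambda>f. MU (DU f))"
    proof (rule injI)
      fix g1 g2 assume e: "MU (DU g1) = MU (DU g2)"
      define g where "g = g1 - g2"
      have DUg: "DU g = DU g1 - DU g2" "DV g = DV g1 - DV g2"
        using linD by (auto simp: g_def linear_diff)
      have "MU (DU g) = 0" using e DUg los_diff[OF linM(1) DUK[of g1] DUK[of g2] negU[OF DUK[of g2]]] by simp
      hence a: "DU g = 0" using conjunct1[OF conjunct2[OF conjunct2[OF conjunct2[OF conjunct2[OF conjunct2[OF conjunct2[OF conjunct2[OF conjunct2[OF h]]]]]]]], rule_format, of "DU g" "0" 0] K0 z DUK by simp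
      have "MV (DV g) = 0" using eqM \<open>MU (DU g) = 0\<close> by simp
      hence b: "DV g = 0" using conjunct2[OF conjunct2[OF conjunct2[OF conjunct2[OF conjunct2[OF conjunct2[OF conjunct2[OF conjunct2[OF conjunct2[OF h]]]]]]]], rule_format, of "DV g" "0" 0] K0 z DVK by simp
      have "g = - (TrU (DU g) + TrV (DV g))" by (rule jump)
      also have "\<dots> = 0" using a b z by simp
      finally show "g1 = g2" by (simp add: g_def)
    qed
    assume "\<exists>C0. (\<forall>u\<in>KU. nXU u \<le> C0 * nN (MU u)) \<and> (\<forall>u\<in>KV. nXV u \<le> C0 * nN (MV u))"
    then obtain C0 where c0: "\<forall>u\<in>KU. nXU u \<le> C0 * nN (MU u)" "\<forall>u\<in>KV. nXV u \<le> C0 * nN (MV u)"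
      by blast
    define C where "C = max C0 0"
    have c: "\<forall>u\<in>KU. nXU u \<le> C * nN (MU u)" "\<forall>u\<in>KV. nXV u \<le> C * nN (MV u)"
      using C0_nonneg[OF c0(1) pN(1)] C0_nonneg[OF c0(2) pN(1)] by (auto simp: C_def)
    obtain A where A: "A \<ge> 0" "\<forall>x\<in>KU. nD (TrU x) \<le> A * nXU x" using bop_nonneg[OF conjunct1[OF h] pU(1)] by blast
    obtain B where B: "B \<ge> 0" "\<forall>x\<in>KV. nD (TrV x) \<le> B * nXV x" using bop_nonneg[OF conjunct1[OF conjunct2[OF h]] pV(1)] by blast
    obtain K where K: "K \<ge> 1" "\<forall>x y. nD (x + y) \<le> K * (nD x + nD y)" using pD(4) by blast
    show "\<exists>C1. \<forall>f. nD f \<le> C1 * nN (MU (DU f))"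
    proof (intro exI allI)
      fix g
      have 1: "nD (TrU (DU g)) \<le> A * C * nN (MU (DU g))"
      proof -
        have "nD (TrU (DU g)) \<le> A * nXU (DU g)" using A(2) DUK[of g] by blast
        also have "\<dots> \<le> A * (C * nN (MU (DU g)))" using c(1) DUK[of g] A(1) by (simp add: mult_left_mono)
        finally show ?thesis by (simp add: mult.assoc)
      qed
      have 2: "nD (TrV (DV g)) \<le> B * C * nN (MU (DU g))"
      proof -
        have "nD (TrV (DV g)) \<le> B * nXV (DV g)" using B(2) DVK[of g] by blast
        also have "\<dots> \<le> B * (C * nN (MV (DV g)))" using c(2) DVK[of g] B(1) by (simp add: mult_left_mono)
        finally show ?thesis by (simp add: mult.assoc eqM)
      qed
      have "nD g = nD (- (TrU (DU g) + TrV (DV g)))" using jump[of g] by simp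
      also have "\<dots> = nD (TrU (DU g) + TrV (DV g))" using pD(3) by blast
      also have "\<dots> \<le> K * (nD (TrU (DU g)) + nD (TrV (DV g)))" using K by blast
      also have "\<dots> \<le> K * (A * C * nN (MU (DU g)) + B * C * nN (MU (DU g)))"
        using 1 2 K by (intro mult_left_mono) auto
      also have "\<dots> = (K * (A * C + B * C)) * nN (MU (DU g))" by (simp add: algebra_simps)
      finally show "nD g \<le> (K * (A * C + B * C)) * nN (MU (DU g))" .
    qed
  qed
qed

end
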